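(* Let $h(n)$ be defined by $h(0)=h(1)=h(2)=h(3)=1$, $h(4)=3$ and $h(n)=h(n-2)+2h(n-3)+2h(n-4)$ for $n\ge5$ (so that, for $n\ge3$, $h(n)$ is the number of saturated stem-loop structures on $[1,n]$). Then for $n\ge1$, $h(n)=[z^n]\dfrac{z}{1-z-2z^3}$, and as $n\to\infty$, $$h(n)\sim \frac{1}{1+6a^2}\,a^{-n}\approx 0.323954\cdot 1.69562^n,$$ where $a\approx 0.5897545$ is the unique real root of $1-z-2z^3$.
   Context: A secondary structure on $[1,n]$ (with $\theta=1$) is a set of pairs $(i,j)$, $1\le i<j\le n$, with no crossing pairs ($i<k<j<\ell$), each position in at most one pair, and $j-i>1$ for each pair. It is saturated if no further pair can be added while remaining a secondary structure. A stem-loop is a secondary structure $S$ having a unique pair $(i_0,j_0)\in S$ such that every other $(i,j)\in S$ satisfies $i<i_0<j_0<j$. *)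

theory Defs
  imports Complex_Main "HOL-Library.Landau_Symbols" "HOL-Computational_Algebra.Formal_Power_Series"
begin

fun h :: "nat \<Rightarrow> nat" where
  "h 0 = 1"
| "h (Suc 0) = 1"
| "h (Suc (Suc 0)) = 1"
| "h (Suc (Suc (Suc 0))) = 1"
| "h (Suc (Suc (Suc (Suc 0)))) = 3"
| "h (Suc (Suc (Suc (Suc (Suc n))))) =
     h (Suc (Suc (Suc n))) + 2 * h (Suc (Suc n)) + 2 * h (Suc n)"

end

theory Submission
  imports Defs
begin
unbundle fps_syntax
lemma h_rec: "h (Suc (Suc (Suc (Suc n)))) = h (Suc (Suc (Suc n))) + 2 * h (Suc n)
   \<and> h (Suc (Suc (Suc (Suc (Suc n))))) = h (Suc (Suc (Suc (Suc n)))) + 2 * h (Suc (Suc n))"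
proof (induction n)
  case 0 then show ?case by simp
next
  case (Suc n)
  then show ?case by (simp only: h.simps(6)) arith
qed

lemma h_rec': "h (n + 4) = h (n + 3) + 2 * h (n + 1)"
proof -
  have e: "n + 4 = Suc (Suc (Suc (Suc n)))" "n + 3 = Suc (Suc (Suc n))" "n + 1 = Suc n" by simp_all
  show ?thesis unfolding e using h_rec[of n] by (rule conjunct1)
qed

lemma h_small: "h 0 = 1" "h 1 = 1" "h 2 = 1" "h 3 = 1" "h 4 = 3"
  by (simp_all add: eval_nat_numeral)

lemma fps_part: "n \<ge> 1 \<Longrightarrow> real (h n) = fps_nth (fps_X / (1 - fps_X - 2 * fps_X ^ 3) :: real fps) n"
proof -
  assume n: "n \<ge> 1"
  define g :: "real fps" where "g = Abs_fps (\<lambda>n. if n = 0 then 0 else real (h n))"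
  define D :: "real fps" where "D = 1 - fps_X - 2 * fps_X ^ 3"
  have D0: "fps_nth D 0 \<noteq> 0" by (simp add: D_def)
  have "g * D = fps_X"
  proof (rule fps_ext)
    fix m
    have eq: "fps_nth (g * D) m = fps_nth g m - fps_nth (fps_X * g) m - 2 * fps_nth (fps_X ^ 3 * g) m"
    proof -
      have "g * D = g - fps_X * g - fps_const 2 * (fps_X ^ 3 * g)"
        by (simp add: D_def algebra_simps fps_numeral_fps_const)
      then show ?thesis by simp
    qed
    show "fps_nth (g * D) m = fps_nth fps_X m"
    proof (cases "m \<ge> 4")
      case True
      then obtain k where k: "m = k + 4" using le_Suc_ex[OF True] by (auto simp: add.commute)
      have e: "m - 1 = k + 3" "m - 3 = k + 1" "\<not> m < 3" "m \<noteq> 0" "m \<noteq> 1" using k by auto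
      have r: "real (h (k + 4)) = real (h (k + 3)) + 2 * real (h (k + 1))"
        using h_rec'[of k] by simp
      show ?thesis unfolding eq fps_X_power_mult_nth fps_X_mult_nth
        by (simp add: e g_def fps_X_def r k add.commute)
    next
      case False
      then have "m = 0 \<or> m = 1 \<or> m = 2 \<or> m = 3" by auto
      then show ?thesis unfolding eq fps_X_power_mult_nth fps_X_mult_nth
        by (auto simp: g_def fps_X_def h_small)
    qed
  qed
  then have "fps_X / D = g * D * inverse D" by (simp add: fps_divide_unit D0)
  also have "\<dots> = g" using inverse_mult_eq_1'[OF D0] by (simp add: mult.assoc)
  finally show ?thesis using n by (simp add: D_def g_def)
qed

lemma asym:
  fixes L :: real
  assumes L3: "L^3 = L^2 + 2" and L1: "L > 1"
  shows "(\<lambda>n. real (h n) / ((1 / (3*L-2)) * L^n)) \<longlonglongrightarrow> 1"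
proof -
  define p where "p = L - 1"
  define q where "q = L^2 - L"
  define C where "C = 1 / (3*L-2)"
  have L0: "L > 0" using L1 by simp
  have C3: "C * (3*L-2) = 1" using L1 unfolding C_def by simp
  define s where "s n = real (h (n+1))" for n
  have srec: "s (n+3) = s (n+2) + 2 * s n" for n
  proof -
    have a: "n + 3 + 1 = n + 4" "n + 2 + 1 = n + 3" by simp_all
    have "real (h (n+4)) = real (h(n+3)) + 2*real(h(n+1))" using h_rec'[of n] by simp
    then show ?thesis unfolding s_def a .
  qed
  define G where "G n = s (n+2) + p * s (n+1) + q * s n" for n
  have G0: "G 0 = L^2" unfolding G_def s_def p_def q_def by (simp add: h_small)
  have GS: "G (Suc n) = L * G n" for n
  proof -
    have "G (Suc n) = s (n+3) + p * s (n+2) + q * s (n+1)" unfolding G_def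
      by (simp add: numeral_3_eq_3 numeral_2_eq_2)
    also have "\<dots> = (1 + p) * s (n+2) + q * s (n+1) + 2 * s n" using srec[of n] by (simp add: algebra_simps)
    also have "\<dots> = L * G n"
    proof -
      have k: "L*(L*(L*x)) = L*(L*x) + x*2" for x
      proof -
        have "L*(L*(L*x)) = L^3 * x" by (simp add: power3_eq_cube)
        also have "\<dots> = (L^2+2)*x" using L3 by simp
        finally show ?thesis by (simp add: algebra_simps power2_eq_square)
      qed
      show ?thesis unfolding G_def p_def q_def
        by (simp add: algebra_simps power2_eq_square k)
    qed
    finally show ?thesis .
  qed
  have Gn: "G n = L^(n+2)" for n
    by (induction n) (simp_all add: G0 GS power2_eq_square)
  define e where "e n = s n - C * L^(n+1)" for n
  have erec: "e (n+2) + p * e (n+1) + q * e n = 0" for n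
  proof -
    have "e (n+2) + p * e (n+1) + q * e n = G n - C * L^(n+1) * (L^2 + p*L + q)"
      unfolding e_def G_def by (simp add: algebra_simps power2_eq_square)
    also have "L^2 + p*L + q = L * (3*L-2)" unfolding p_def q_def
      by (simp add: algebra_simps power2_eq_square)
    also have "G n - C * L^(n+1) * (L * (3*L-2)) = L^(n+2) - (C * (3*L-2)) * L^(n+2)"
      by (simp add: Gn algebra_simps)
    also have "\<dots> = 0" using C3 by simp
    finally show ?thesis .
  qed
  define E where "E n = e (n+1)^2 + p * e (n+1) * e n + q * (e n)^2" for n
  have ES: "E (Suc n) = q * E n" for n
  proof -
    have r: "e (n+2) = - p * e (n+1) - q * e n" using erec[of n] by simp
    have "E (Suc n) = e (n+2)^2 + p * e (n+2) * e (n+1) + q * (e (n+1))^2"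
      unfolding E_def by (simp add: numeral_2_eq_2)
    also have "\<dots> = q * E n" unfolding r E_def by (simp add: algebra_simps power2_eq_square)
    finally show ?thesis .
  qed
  have En: "E n = q^n * E 0" for n
    by (induction n) (simp_all add: ES)
  define c where "c = q - p^2/4"
  have cpos: "c > 0"
  proof -
    have "c = (3*L+1)*(L-1)/4" unfolding c_def p_def q_def by (simp add: field_simps power2_eq_square)
    moreover have "(3*L+1)*(L-1) > 0" using L1 by simp
    ultimately show ?thesis by simp
  qed
  have ebound: "c * (e n)^2 \<le> E n" for n
  proof -
    have "E n - c * (e n)^2 = (e (n+1) + p/2 * e n)^2" unfolding E_def c_def
      by (simp add: algebra_simps power2_eq_square)
    then show ?thesis by (metis diff_ge_0_iff_ge zero_le_power2)
  qed
  define r where "r = q / L^2"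
  have r: "r = (L - 1) / L" unfolding r_def q_def using L0 by (simp add: field_simps power2_eq_square)
  have r0: "0 \<le> r" "r < 1" unfolding r using L1 by simp_all
  have qpos: "q > 0" unfolding q_def using L1 by (simp add: power2_eq_square)
  have bnd: "norm ((e n / L^n)^2) \<le> (E 0 / c) * r^n" for n
  proof -
    have pw: "(L^n)^2 = (L^2)^n" unfolding power_mult[symmetric] by (simp add: mult.commute)
    have "(e n / L^n)^2 = (e n)^2 / (L^2)^n" by (simp only: power_divide pw)
    also have "\<dots> \<le> (E n / c) / (L^2)^n"
    proof (rule divide_right_mono)
      show "(e n)^2 \<le> E n / c" using ebound[of n] cpos by (simp add: pos_le_divide_eq mult.commute)
    qed simp
    also have "\<dots> = (E 0 / c) * r^n" unfolding En[of n] r_def power_divide using L0 by simp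
    finally show ?thesis by simp
  qed
  have "(\<lambda>n. (E 0 / c) * r^n) \<longlonglongrightarrow> 0"
    using r0 by (intro tendsto_mult_right_zero LIMSEQ_power_zero) simp
  then have sq0: "(\<lambda>n. (e n / L^n)^2) \<longlonglongrightarrow> 0"
  proof (rule tendsto_sandwich[rotated 3])
    show "(\<lambda>n. 0::real) \<longlonglongrightarrow> 0" by simp
    show "\<forall>\<^sub>F n in sequentially. 0 \<le> (e n / L^n)^2" by simp
    show "\<forall>\<^sub>F n in sequentially. (e n / L^n)^2 \<le> (E 0 / c) * r^n"
      using bnd by (simp add: always_eventually)
  qed
  have "(\<lambda>n. sqrt ((e n / L^n)^2)) \<longlonglongrightarrow> sqrt 0"
    by (intro tendsto_real_sqrt sq0)
  then have "(\<lambda>n. \<bar>e n / L^n\<bar>) \<longlonglongrightarrow> 0" by (simp only: real_sqrt_abs real_sqrt_zero)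
  then have e0: "(\<lambda>n. e n / L^n) \<longlonglongrightarrow> 0" by (simp only: tendsto_rabs_zero_iff)
  have "(\<lambda>n. 1 + (e n / L^n) * (1 / (C * L))) \<longlonglongrightarrow> 1 + 0 * (1 / (C * L))"
    by (intro tendsto_intros e0)
  moreover have "real (h (Suc n)) / (C * L^(Suc n)) = 1 + (e n / L^n) * (1 / (C * L))" for n
  proof -
    have Cp: "C \<noteq> 0" using C3 by auto
    have "real (h (Suc n)) = C * L^(Suc n) + e n" unfolding e_def s_def by simp
    then show ?thesis using Cp L0 by (simp add: field_simps)
  qed
  ultimately have "(\<lambda>n. real (h (Suc n)) / (C * L^(Suc n))) \<longlonglongrightarrow> 1" by simp
  then show ?thesis unfolding C_def by (rule LIMSEQ_imp_Suc)
qed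

lemma Pmono: "(x::real) < y \<Longrightarrow> 1 - y - 2*y^3 < 1 - x - 2*x^3"
proof -
  assume xy: "x < y"
  have "(1 - x - 2*x^3) - (1 - y - 2*y^3) = (y - x) * (1 + 2*((x + y/2)^2 + 3*y^2/4))"
    by (simp add: algebra_simps power2_eq_square power3_eq_cube)
  moreover have "(y - x) * (1 + 2*((x + y/2)^2 + 3*y^2/4)) > 0"
    using xy by (intro mult_pos_pos) (simp_all add: add_pos_nonneg)
  ultimately show ?thesis by simp
qed

theorem mainTheorem8:
  fixes a :: real
  assumes "1 - a - 2 * a ^ 3 = 0"
  shows "(\<forall>n\<ge>1. real (h n) = fps_nth (fps_X / (1 - fps_X - 2 * fps_X ^ 3) :: real fps) n)
     \<and> (\<exists>!z::real. 1 - z - 2 * z ^ 3 = 0)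
     \<and> (\<lambda>n. real (h n)) \<sim>[at_top] (\<lambda>n. (1 / (1 + 6 * a ^ 2)) * (1 / a) ^ n)
     \<and> \<bar>a - 0.5897545\<bar> < 10 powi (-7)
     \<and> \<bar>1 / (1 + 6 * a ^ 2) - 0.323954\<bar> < 10 powi (-6)
     \<and> \<bar>1 / a - 1.69562\<bar> < 10 powi (-5)"
proof -
  have P0: "1 - a - 2 * a ^ 3 = 0" by fact
  have lo: "0.5897545 < a"
  proof (rule ccontr)
    assume "\<not> 0.5897545 < a"
    then have "a < 0.5897545 \<or> a = 0.5897545" by auto
    moreover have Pv: "1 - (0.5897545::real) - 2 * 0.5897545^3 > 0" by (simp add: power3_eq_cube)
    ultimately have "1 - a - 2*a^3 > 0"
    proof (elim disjE)
      assume eq: "a = 0.5897545" show ?thesis unfolding eq by (rule Pv)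
    qed (use Pmono[of a "0.5897545"] Pv in auto)
    then show False using P0 by simp
  qed
  have hi: "a < 0.5897546"
  proof (rule ccontr)
    assume "\<not> a < 0.5897546"
    then have "0.5897546 < a \<or> a = 0.5897546" by auto
    moreover have Pv: "1 - (0.5897546::real) - 2 * 0.5897546^3 < 0" by (simp add: power3_eq_cube)
    ultimately have "1 - a - 2*a^3 < 0"
    proof (elim disjE)
      assume eq: "a = 0.5897546" show ?thesis unfolding eq by (rule Pv)
    qed (use Pmono[of "0.5897546" a] Pv in auto)
    then show False using P0 by simp
  qed
  have uniq: "\<exists>!z::real. 1 - z - 2 * z ^ 3 = 0"
  proof
    show "1 - a - 2 * a ^ 3 = 0" by fact
    fix z :: real assume z: "1 - z - 2 * z ^ 3 = 0"
    show "z = a"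
    proof (rule ccontr)
      assume "z \<noteq> a"
      then have "z < a \<or> a < z" by auto
      then show False using Pmono[of z a] Pmono[of a z] z P0 by auto
    qed
  qed
  have a0: "a > 0" using lo by simp
  define L where "L = 1 / a"
  have L3: "L^3 = L^2 + 2"
  proof -
    have "L^3 - L^2 - 2 = (1 - a - 2 * a ^ 3) / a^3" unfolding L_def using a0
      by (simp add: field_simps power2_eq_square power3_eq_cube)
    then show ?thesis using P0 by simp
  qed
  have L1: "L > 1" unfolding L_def using a0 hi by simp
  have CL: "1 + 6 * a^2 = 3 * L - 2"
  proof -
    have "6 * a^3 = 3 - 3 * a" using P0 by simp
    then have "a * (1 + 6 * a^2) = a * (3 * L - 2)" unfolding L_def using a0
      by (simp add: algebra_simps power2_eq_square power3_eq_cube)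
    then show ?thesis using a0 by simp
  qed
  have asy: "(\<lambda>n. real (h n)) \<sim>[at_top] (\<lambda>n. (1 / (1 + 6 * a ^ 2)) * (1 / a) ^ n)"
    apply (rule asymp_equivI')
    using asym[OF L3 L1] unfolding CL L_def by simp
  have p7: "(10::real) powi (-7) = 1 / 10^7" by (simp add: power_int_minus_divide)
  have p6: "(10::real) powi (-6) = 1 / 10^6" by (simp add: power_int_minus_divide)
  have p5: "(10::real) powi (-5) = 1 / 10^5" by (simp add: power_int_minus_divide)
  have n1: "\<bar>a - 0.5897545\<bar> < 10 powi (-7)" unfolding p7 using lo hi by simp
  have a2: "0.5897545^2 < a^2" "a^2 < 0.5897546^2" using lo hi a0
    by (simp_all add: power_strict_mono)
  have n2: "\<bar>1 / (1 + 6 * a ^ 2) - 0.323954\<bar> < 10 powi (-6)"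
  proof -
    have pos: "1 + 6 * a^2 > 0" by (simp add: add_pos_nonneg)
    have "0.323953 * (1 + 6 * a^2) < 1" "1 < 0.323955 * (1 + 6 * a^2)" using a2 by (simp_all add: power_divide)
    then have "0.323953 < 1 / (1 + 6 * a ^ 2)" "1 / (1 + 6 * a ^ 2) < 0.323955"
      using pos by (simp_all add: field_simps)
    then show ?thesis unfolding p6 abs_less_iff by linarith
  qed
  have n3: "\<bar>1 / a - 1.69562\<bar> < 10 powi (-5)"
  proof -
    have "1.69561 * a < 1" "1 < 1.69563 * a" using lo hi by simp_all
    then have "1.69561 < 1 / a" "1 / a < 1.69563" using a0 by (simp_all add: field_simps)
    then show ?thesis unfolding p5 abs_less_iff by linarith
  qed
  show ?thesis using fps_part uniq asy n1 n2 n3 by blast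
qed
end
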